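(* Let $h>0$ and let $\Gamma_h\subset\mathbf{R}^3$ be the closed curve on the cylinder $x^2+y^2=1$ given by $\Gamma_h(t)=(\cos t,\sin t,z(t))$, $t\in[0,2\pi]$, where $z$ is the continuous piecewise linear function with $z(0)=z(\pi)=z(2\pi)=h/2$, $z(\pi/2)=z(3\pi/2)=-h/2$, linear on each interval $[k\pi/2,(k+1)\pi/2]$, $k=0,1,2,3$. (Thus $\Gamma_h$ consists of four helical segments joining cyclically the points $p_1=(1,0,h/2)$, $p_2=(0,1,-h/2)$, $p_3=(-1,0,h/2)$, $p_4=(0,-1,-h/2)$.) Let $\overline\Gamma_h$ be the orthogonal projection of $\Gamma_h$ into the $xz$-plane. Then the width of $\Gamma_h$ equals the width of $\overline\Gamma_h$.
   Context: The width of a set in $\mathbf{R}^3$ is the infimum of the distances between pairs of parallel planes such that the set lies between them. The width of the planar set $\overline\Gamma_h$ (in the $xz$-plane) is the infimum of the distances between pairs of parallel lines in the $xz$-plane such that $\overline\Gamma_h$ lies between them. *)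

theory Defs
  imports "HOL-Analysis.Analysis"
begin

definition width :: "'a::euclidean_space set \<Rightarrow> real" where
  "width S = Inf {b - a | u a b. norm u = 1 \<and> a \<le> b \<and> (\<forall>x\<in>S. a \<le> u \<bullet> x \<and> u \<bullet> x \<le> b)}"

definition zfun :: "real \<Rightarrow> real \<Rightarrow> real" where
  "zfun h t =
     (if t \<le> pi/2 then h/2 - 2*h*t/pi
      else if t \<le> pi then -h/2 + 2*h*(t - pi/2)/pi
      else if t \<le> 3*pi/2 then h/2 - 2*h*(t - pi)/pi
      else -h/2 + 2*h*(t - 3*pi/2)/pi)"

definition Gamma_curve :: "real \<Rightarrow> (real^3) set" where
  "Gamma_curve h = (\<lambda>t. vector [cos t, sin t, zfun h t]) ` {0..2*pi}"

text \<open>Its orthogonal projection into the xz-plane, with the xz-plane identified with R^2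
  via (x,0,z) \<mapsto> (x,z) (an isometry).\<close>
definition Gamma_proj :: "real \<Rightarrow> (real^2) set" where
  "Gamma_proj h = (\<lambda>p. vector [p$1, p$3]) ` Gamma_curve h"

end

theory Submission
  imports Defs
begin

lemma inner3: "(u::real^3) \<bullet> v = u$1 * v$1 + u$2 * v$2 + u$3 * v$3"
  by (simp add: inner_vec_def sum_3)
lemma inner2: "(u::real^2) \<bullet> v = u$1 * v$1 + u$2 * v$2"
  by (simp add: inner_vec_def sum_2)
lemma norm3: "norm (u::real^3) = sqrt(u$1^2+u$2^2+u$3^2)"
  by (simp add: norm_eq_sqrt_inner inner3 power2_eq_square)
lemma norm2: "norm (u::real^2) = sqrt(u$1^2+u$2^2)"
  by (simp add: norm_eq_sqrt_inner inner2 power2_eq_square)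

lemma z1: "0 \<le> t \<Longrightarrow> t \<le> pi/2 \<Longrightarrow> zfun h t = h/2 - 2*h*t/pi"
  by (simp add: zfun_def)
lemma z2: "pi/2 \<le> t \<Longrightarrow> t \<le> pi \<Longrightarrow> zfun h t = -h/2 + 2*h*(t-pi/2)/pi"
  by (auto simp add: zfun_def field_simps)
lemma z3: "pi \<le> t \<Longrightarrow> t \<le> 3*pi/2 \<Longrightarrow> zfun h t = h/2 - 2*h*(t-pi)/pi"
  by (auto simp add: zfun_def field_simps)
lemma z4: "3*pi/2 \<le> t \<Longrightarrow> zfun h t = -h/2 + 2*h*(t-3*pi/2)/pi"
proof -
  assume t: "3*pi/2 \<le> t"
  have "\<not> t \<le> pi/2" "\<not> t \<le> pi" using t pi_gt_zero by linarith+
  moreover have "t \<le> 3*pi/2 \<Longrightarrow> t = 3*pi/2" using t by linarith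
  ultimately show ?thesis by (auto simp add: zfun_def field_simps)
qed

lemma cos_sin_ge1: "0 \<le> a \<Longrightarrow> a \<le> pi/2 \<Longrightarrow> 1 - cos a \<le> sin a"
proof -
  assume a: "0 \<le> a" "a \<le> pi/2"
  have s: "sin a \<ge> 0" using a by (intro sin_ge_zero) auto
  have c: "cos a \<ge> 0" using a by (intro cos_ge_zero) auto
  have sc: "sin a * cos a \<ge> 0" using s c by simp
  have "(sin a + cos a)^2 = (sin a)^2 + (cos a)^2 + 2*(sin a * cos a)"
    by (simp add: power2_eq_square algebra_simps)
  hence "(sin a + cos a)^2 \<ge> 1" using sc sin_cos_squared_add[of a] by linarith
  hence "sin a + cos a \<ge> 1" using s c
    by (metis abs_le_square_iff abs_of_nonneg add_nonneg_nonneg one_power2 abs_one)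
  thus ?thesis by simp
qed

lemma cos_sum_ge: "0 \<le> a \<Longrightarrow> a \<le> pi/2 \<Longrightarrow> 0 \<le> b \<Longrightarrow> b \<le> pi/2 \<Longrightarrow> 1 + cos(a+b) \<le> cos a + cos b"
proof -
  assume a: "0 \<le> a" "a \<le> pi/2" and b: "0 \<le> b" "b \<le> pi/2"
  have 1: "1 - cos a \<le> sin a" "1 - cos b \<le> sin b" using a b cos_sin_ge1 by auto
  have "0 \<le> 1 - cos a" "0 \<le> 1 - cos b" by auto
  have "sin a \<ge> 0" "sin b \<ge> 0" using a b by (auto intro: sin_ge_zero)
  hence "(1 - cos a)*(1-cos b) \<le> sin a * sin b" using 1 by (intro mult_mono) auto
  thus ?thesis by (simp add: cos_add algebra_simps)
qed


definition P :: "real \<Rightarrow> real \<Rightarrow> real^3" where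
  "P h t = vector [cos t, sin t, zfun h t]"

lemma keycase:
  assumes "cos(t1-\<phi>) = cos a" "cos(t2-\<phi>) = - cos b"
    "zfun h t1 - zfun h t2 = 2*h*(a+b)/pi" "0\<le>a" "a\<le>pi/2" "0\<le>b" "b\<le>pi/2" "(r::real)\<ge>0"
  shows "r*cos(t1-\<phi>) + u3*zfun h t1 - (r*cos(t2-\<phi>) + u3*zfun h t2) \<ge> r + r*cos(a+b) + u3*(2*h/pi)*(a+b)"
proof -
  have "r*(1 + cos(a+b)) \<le> r*(cos a + cos b)" using cos_sum_ge assms by (intro mult_left_mono) auto
  moreover have "u3*zfun h t1 - u3*zfun h t2 = u3*(2*h/pi)*(a+b)" using assms(3)
    by (simp add: right_diff_distrib[symmetric])
  ultimately show ?thesis using assms(1,2) by (simp add: algebra_simps)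
qed

lemma keyK:
  assumes h: "h > 0" and u3: "u$3 \<ge> 0" and tau: "0 \<le> \<tau>" "\<tau> \<le> pi/2"
  shows "\<exists>t1\<in>{0..2*pi}. \<exists>t2\<in>{0..2*pi}. u \<bullet> P h t1 - u \<bullet> P h t2 \<ge>
     sqrt(u$1^2+u$2^2) + sqrt(u$1^2+u$2^2)*cos \<tau> + u$3*(2*h/pi)*\<tau>"
proof -
  define r where "r = sqrt(u$1^2+u$2^2)"
  have r0: "r \<ge> 0" unfolding r_def by simp
  obtain \<phi> where ph: "0 \<le> \<phi>" "\<phi> < 2*pi" "u$1 = r * cos \<phi>" "u$2 = r * sin \<phi>"
  proof (cases "r = 0")
    case True
    hence "u$1 = 0" "u$2 = 0" unfolding r_def by (auto simp: power2_eq_square add_nonneg_eq_0_iff)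
    thus ?thesis using that[of 0] True by simp
  next
    case False
    hence rp: "r > 0" using r0 by simp
    have r2: "r^2 = u$1^2+u$2^2" unfolding r_def by simp
    have "(u$1/r)^2 + (u$2/r)^2 = (u$1^2+u$2^2)/r^2" by (simp only: power_divide add_divide_distrib)
    also have "\<dots> = r^2/r^2" using r2 by simp
    also have "\<dots> = 1" using rp by simp
    finally have "(u$1/r)^2 + (u$2/r)^2 = 1" .
    then obtain t where "0 \<le> t" "t < 2*pi" "u$1/r = cos t" "u$2/r = sin t" by (rule sincos_total_2pi)
    thus ?thesis using that[of t] rp by (simp add: field_simps)
  qed
  have dot: "u \<bullet> P h t = r*cos(t-\<phi>) + u$3*zfun h t" for t
    unfolding P_def inner3 by (simp add: ph cos_diff algebra_simps)
  define c where "c = 2*h/pi"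
  have goal: "\<exists>t1\<in>{0..2*pi}. \<exists>t2\<in>{0..2*pi}. r*cos(t1-\<phi>) + u$3*zfun h t1 - (r*cos(t2-\<phi>) + u$3*zfun h t2) \<ge>
     r + r*cos \<tau> + u$3*(2*h/pi)*\<tau>"
  proof -
    have pi0: "pi > 0" by simp
    have "(\<phi> \<le> pi/2) \<or> (pi/2 \<le> \<phi> \<and> \<phi> \<le> pi) \<or> (pi \<le> \<phi> \<and> \<phi> \<le> 3*pi/2) \<or> (3*pi/2 \<le> \<phi>)" by linarith
    moreover
    { assume q: "\<phi> \<le> pi/2"
      define b where "b = min \<tau> (pi/2 - \<phi>)"
      define a where "a = \<tau> - b"
      have ab: "0 \<le> a" "a \<le> \<phi>" "0 \<le> b" "b \<le> pi/2 - \<phi>" "a \<le> pi/2" "b \<le> pi/2" "\<tau> = a+b"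
        using q tau ph unfolding a_def b_def by (auto simp: min_def)
      have "zfun h (\<phi>-a) - zfun h (\<phi>+b+pi) = 2*h*(a+b)/pi"
        using ab ph by (simp add: z1 z3 field_simps)
      moreover have "cos(\<phi>+b+pi-\<phi>) = - cos b" by simp
      ultimately have ?thesis using keycase[of "\<phi>-a" \<phi> a "\<phi>+b+pi" b h r "u$3"] ab r0 ph
        by (intro bexI[of _ "\<phi>-a"] bexI[of _ "\<phi>+b+pi"]) auto }
    moreover
    { assume q: "pi/2 \<le> \<phi> \<and> \<phi> \<le> pi"
      define b where "b = min \<tau> (pi - \<phi>)"
      define a where "a = \<tau> - b"
      have ab: "0 \<le> a" "a \<le> \<phi> - pi/2" "0 \<le> b" "b \<le> pi - \<phi>" "a \<le> pi/2" "b \<le> pi/2" "\<tau> = b+a"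
        using q tau ph unfolding a_def b_def by (auto simp: min_def)
      have "zfun h (\<phi>+b) - zfun h (\<phi>-a+pi) = 2*h*(b+a)/pi"
        using ab q by (simp add: z2 z4 field_simps)
      moreover have "cos(\<phi>-a+pi-\<phi>) = - cos a" by simp
      ultimately have ?thesis using keycase[of "\<phi>+b" \<phi> b "\<phi>-a+pi" a h r "u$3"] ab r0 ph q
        by (intro bexI[of _ "\<phi>+b"] bexI[of _ "\<phi>-a+pi"]) auto }
    moreover
    { assume q: "pi \<le> \<phi> \<and> \<phi> \<le> 3*pi/2"
      define b where "b = min \<tau> (3*pi/2 - \<phi>)"
      define a where "a = \<tau> - b"
      have ab: "0 \<le> a" "a \<le> \<phi> - pi" "0 \<le> b" "b \<le> 3*pi/2 - \<phi>" "a \<le> pi/2" "b \<le> pi/2" "\<tau> = a+b"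
        using q tau ph unfolding a_def b_def by (auto simp: min_def)
      have "zfun h (\<phi>-a) - zfun h (\<phi>+b-pi) = 2*h*(a+b)/pi"
        using ab q by (simp add: z1 z3 field_simps)
      moreover have "cos(\<phi>+b-pi-\<phi>) = - cos b" by simp
      ultimately have ?thesis using keycase[of "\<phi>-a" \<phi> a "\<phi>+b-pi" b h r "u$3"] ab r0 ph q
        by (intro bexI[of _ "\<phi>-a"] bexI[of _ "\<phi>+b-pi"]) auto }
    moreover
    { assume q: "3*pi/2 \<le> \<phi>"
      define b where "b = min \<tau> (2*pi - \<phi>)"
      define a where "a = \<tau> - b"
      have ab: "0 \<le> a" "a \<le> \<phi> - 3*pi/2" "0 \<le> b" "b \<le> 2*pi - \<phi>" "a \<le> pi/2" "b \<le> pi/2" "\<tau> = b+a"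
        using q tau ph unfolding a_def b_def by (auto simp: min_def)
      have "zfun h (\<phi>+b) - zfun h (\<phi>-a-pi) = 2*h*(b+a)/pi"
        using ab q by (simp add: z2 z4 field_simps)
      moreover have "cos(\<phi>-a-pi-\<phi>) = - cos a" by simp
      ultimately have ?thesis using keycase[of "\<phi>+b" \<phi> b "\<phi>-a-pi" a h r "u$3"] ab r0 ph q
        by (intro bexI[of _ "\<phi>+b"] bexI[of _ "\<phi>-a-pi"]) auto }
    ultimately show ?thesis by blast
  qed
  thus ?thesis unfolding dot r_def by simp
qed


definition fM :: "real \<Rightarrow> real \<Rightarrow> real \<Rightarrow> real" where
  "fM h r s = (SUP \<tau>\<in>{0..pi/2}. r*cos \<tau> + s*(2*h/pi)*\<tau>)"

lemma fM_upper:
  assumes "h > 0" "r \<ge> 0" "s \<ge> 0" "0 \<le> \<tau>" "\<tau> \<le> pi/2"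
  shows "r*cos \<tau> + s*(2*h/pi)*\<tau> \<le> fM h r s"
  unfolding fM_def
proof (rule cSUP_upper)
  show "\<tau> \<in> {0..pi/2}" using assms by auto
  show "bdd_above ((\<lambda>\<tau>. r*cos \<tau> + s*(2*h/pi)*\<tau>) ` {0..pi/2})"
  proof (rule bdd_aboveI2)
    fix x :: real assume x: "x \<in> {0..pi/2}"
    have "r*cos x \<le> r*1" using assms by (intro mult_left_mono) auto
    moreover have "s*(2*h/pi)*x \<le> s*(2*h/pi)*(pi/2)" using assms x
      by (intro mult_left_mono) auto
    ultimately show "r*cos x + s*(2*h/pi)*x \<le> r + s*h" by simp
  qed
qed

lemma fM_least:
  assumes "\<And>\<tau>. 0 \<le> \<tau> \<Longrightarrow> \<tau> \<le> pi/2 \<Longrightarrow> r*cos \<tau> + s*(2*h/pi)*\<tau> \<le> B"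
  shows "fM h r s \<le> B"
  unfolding fM_def by (rule cSUP_least) (use assms in auto)

lemma P_mem: "t \<in> {0..2*pi} \<Longrightarrow> P h t \<in> Gamma_curve h"
  unfolding P_def Gamma_curve_def by auto

lemma curve_lower:
  fixes u :: "real^3"
  assumes h: "h > 0" and ab: "\<forall>x\<in>Gamma_curve h. a \<le> u \<bullet> x \<and> u \<bullet> x \<le> b"
  shows "sqrt(u$1^2+u$2^2) + fM h (sqrt(u$1^2+u$2^2)) \<bar>u$3\<bar> \<le> b - a"
proof -
  define r where "r = sqrt(u$1^2+u$2^2)"
  have "fM h r \<bar>u$3\<bar> \<le> b - a - r"
  proof (rule fM_least)
    fix \<tau> :: real assume t: "0 \<le> \<tau>" "\<tau> \<le> pi/2"
    show "r*cos \<tau> + \<bar>u$3\<bar>*(2*h/pi)*\<tau> \<le> b - a - r"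
    proof (cases "u$3 \<ge> 0")
      case True
      from keyK[OF h True t] obtain t1 t2 where tt: "t1 \<in> {0..2*pi}" "t2 \<in> {0..2*pi}"
        "u \<bullet> P h t1 - u \<bullet> P h t2 \<ge> r + r*cos \<tau> + u$3*(2*h/pi)*\<tau>" unfolding r_def by blast
      have "u \<bullet> P h t1 \<le> b" "a \<le> u \<bullet> P h t2" using ab P_mem tt by auto
      thus ?thesis using tt True by simp
    next
      case False
      hence n: "(-u)$3 \<ge> 0" by simp
      from keyK[OF h n t] obtain t1 t2 where tt: "t1 \<in> {0..2*pi}" "t2 \<in> {0..2*pi}"
        "(-u) \<bullet> P h t1 - (-u) \<bullet> P h t2 \<ge> r + r*cos \<tau> + (-u)$3*(2*h/pi)*\<tau>" unfolding r_def by auto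
      have "u \<bullet> P h t2 \<le> b" "a \<le> u \<bullet> P h t1" using ab P_mem tt by auto
      thus ?thesis using tt False by simp
    qed
  qed
  thus ?thesis unfolding r_def by simp
qed

lemma proj_upper:
  assumes h: "h > 0" and r: "r \<ge> 0" and s: "s \<ge> 0" and rs: "r^2 + s^2 = 1"
  shows "width (Gamma_proj h) \<le> r + fM h r s"
proof -
  define M where "M = fM h r s"
  define S where "S = {b - a | (u::real^2) a b. norm u = 1 \<and> a \<le> b \<and> (\<forall>x\<in>Gamma_proj h. a \<le> u \<bullet> x \<and> u \<bullet> x \<le> b)}"
  have Mr: "r \<le> M" using fM_upper[OF h r s, of 0] unfolding M_def by simp
  have low: "s*h/2 - M \<le> r * cos t + s * zfun h t" if t: "0 \<le> t" "t \<le> 2*pi" for t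
  proof -
    have "\<exists>\<tau>. 0 \<le> \<tau> \<and> \<tau> \<le> pi/2 \<and> s*h/2 - (r*cos \<tau> + s*(2*h/pi)*\<tau>) \<le> r * cos t + s * zfun h t"
    proof -
      have "t \<le> pi/2 \<or> (pi/2 \<le> t \<and> t \<le> pi) \<or> (pi \<le> t \<and> t \<le> 3*pi/2) \<or> 3*pi/2 \<le> t" by linarith
      moreover
      { assume q: "t \<le> pi/2"
        have "0 \<le> r*cos t" using q t r by (intro mult_nonneg_nonneg cos_ge_zero) auto
        hence ?thesis using q t by (intro exI[of _ t]) (simp add: z1 field_simps) }
      moreover
      { assume q: "pi/2 \<le> t \<and> t \<le> pi"
        have "cos t = - cos (pi - t)" by simp
        hence ?thesis using q t by (intro exI[of _ "pi - t"]) (simp add: z2 field_simps) }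
      moreover
      { assume q: "pi \<le> t \<and> t \<le> 3*pi/2"
        have "cos t = - cos (t - pi)" by (simp add: cos_diff)
        hence ?thesis using q t by (intro exI[of _ "t - pi"]) (simp add: z3 field_simps) }
      moreover
      { assume q: "3*pi/2 \<le> t"
        have c: "cos t = cos (2*pi - t)" by (simp add: cos_diff)
        have "0 \<le> r*cos (2*pi-t)" using q t r by (intro mult_nonneg_nonneg cos_ge_zero) auto
        hence ?thesis using q t c by (intro exI[of _ "2*pi - t"]) (simp add: z4 field_simps) }
      ultimately show ?thesis by blast
    qed
    then obtain \<tau> where "0 \<le> \<tau>" "\<tau> \<le> pi/2" "s*h/2 - (r*cos \<tau> + s*(2*h/pi)*\<tau>) \<le> r * cos t + s * zfun h t" by blast
    moreover have "r*cos \<tau> + s*(2*h/pi)*\<tau> \<le> M" using fM_upper[OF h r s] calculation unfolding M_def by simp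
    ultimately show ?thesis by linarith
  qed
  have up: "r * cos t + s * zfun h t \<le> r + s*h/2" if t: "0 \<le> t" "t \<le> 2*pi" for t
  proof -
    have "zfun h t \<le> h/2" using t h pi_gt_zero
      unfolding zfun_def by (auto simp: field_simps)
    hence "s * zfun h t \<le> s*(h/2)" using s by (intro mult_left_mono) auto
    moreover have "r * cos t \<le> r * 1" using r by (intro mult_left_mono) auto
    ultimately show ?thesis by simp
  qed
  have mem: "r + M \<in> S"
  proof -
    have "norm (vector [r, s] :: real^2) = 1" using rs by (simp add: norm2)
    moreover have "\<forall>x\<in>Gamma_proj h. s*h/2 - M \<le> (vector [r, s] :: real^2) \<bullet> x \<and> (vector [r, s] :: real^2) \<bullet> x \<le> r + s*h/2"
      using low up unfolding Gamma_proj_def Gamma_curve_def by (auto simp: inner2)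
    moreover have "s*h/2 - M \<le> r + s*h/2" using Mr r by simp
    ultimately show ?thesis unfolding S_def
      by (intro CollectI exI[of _ "vector [r, s] :: real^2"] exI[of _ "s*h/2 - M"] exI[of _ "r + s*h/2"]) auto
  qed
  have "bdd_below S" unfolding S_def by (rule bdd_belowI[of _ 0]) auto
  hence "Inf S \<le> r + M" using mem by (rule cInf_lower[rotated])
  thus ?thesis unfolding width_def S_def M_def .
qed

theorem lemma5p1:
  fixes h :: real
  assumes "h > 0"
  shows "width (Gamma_curve h) = width (Gamma_proj h)"
proof -
  define S3 where "S3 = {b - a | (u::real^3) a b. norm u = 1 \<and> a \<le> b \<and> (\<forall>x\<in>Gamma_curve h. a \<le> u \<bullet> x \<and> u \<bullet> x \<le> b)}"
  define S2 where "S2 = {b - a | (u::real^2) a b. norm u = 1 \<and> a \<le> b \<and> (\<forall>x\<in>Gamma_proj h. a \<le> u \<bullet> x \<and> u \<bullet> x \<le> b)}"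
  have w3: "width (Gamma_curve h) = Inf S3" unfolding width_def S3_def ..
  have w2: "width (Gamma_proj h) = Inf S2" unfolding width_def S2_def ..
  have b3: "bdd_below S3" unfolding S3_def by (rule bdd_belowI[of _ 0]) auto
  have b2: "bdd_below S2" unfolding S2_def by (rule bdd_belowI[of _ 0]) auto
  have lift: "\<exists>y\<in>S3. y \<le> x" if "x \<in> S2" for x
  proof -
    from that obtain v :: "real^2" and a b where x: "x = b - a" "norm v = 1" "a \<le> b"
      "\<forall>p\<in>Gamma_proj h. a \<le> v \<bullet> p \<and> v \<bullet> p \<le> b" unfolding S2_def by blast
    define u :: "real^3" where "u = vector [v$1, 0, v$2]"
    have "norm u = 1" using x(2) unfolding u_def by (simp add: norm2 norm3)
    moreover have "\<forall>p\<in>Gamma_curve h. a \<le> u \<bullet> p \<and> u \<bullet> p \<le> b"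
    proof
      fix p assume p: "p \<in> Gamma_curve h"
      hence "(vector [p$1, p$3] :: real^2) \<in> Gamma_proj h" unfolding Gamma_proj_def by auto
      moreover have "u \<bullet> p = v \<bullet> (vector [p$1, p$3] :: real^2)" unfolding u_def by (simp add: inner2 inner3)
      ultimately show "a \<le> u \<bullet> p \<and> u \<bullet> p \<le> b" using x(4) by auto
    qed
    ultimately have "x \<in> S3" using x unfolding S3_def by blast
    thus ?thesis by auto
  qed
  define r0 :: real where "r0 = 1"
  have ne2: "S2 \<noteq> {}"
  proof -
    have "width (Gamma_proj h) \<le> 1 + fM h 1 0" using proj_upper[OF assms, of 1 0] by simp
    have "norm (vector [1, 0] :: real^2) = 1" by (simp add: norm2)
    moreover have "\<forall>p\<in>Gamma_proj h. -1 \<le> (vector [1, 0] :: real^2) \<bullet> p \<and> (vector [1, 0] :: real^2) \<bullet> p \<le> 1"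
      unfolding Gamma_proj_def Gamma_curve_def by (auto simp: inner2)
    ultimately have "1 - (-1) \<in> S2" unfolding S2_def by fastforce
    thus ?thesis by auto
  qed
  have le: "Inf S3 \<le> Inf S2" by (rule cInf_mono[OF ne2 b3 lift])
  have ne3: "S3 \<noteq> {}" using ne2 lift by blast
  have ge: "Inf S2 \<le> Inf S3"
  proof (rule cInf_greatest[OF ne3])
    fix x assume "x \<in> S3"
    then obtain u :: "real^3" and a b where x: "x = b - a" "norm u = 1" "a \<le> b"
      "\<forall>p\<in>Gamma_curve h. a \<le> u \<bullet> p \<and> u \<bullet> p \<le> b" unfolding S3_def by blast
    define r where "r = sqrt(u$1^2+u$2^2)"
    have "u$1^2+u$2^2+u$3^2 = 1" using x(2) by (simp add: norm3)
    hence rs: "r^2 + \<bar>u$3\<bar>^2 = 1" unfolding r_def by simp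
    have "Inf S2 \<le> r + fM h r \<bar>u$3\<bar>" using proj_upper[OF assms _ _ rs] w2 unfolding r_def by simp
    also have "\<dots> \<le> x" using curve_lower[OF assms x(4)] x(1) unfolding r_def by simp
    finally show "Inf S2 \<le> x" .
  qed
  show ?thesis using le ge w2 w3 by simp
qed

end
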